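(* Let $\mathcal E:\mathbb R^d\to\mathbb R$ be continuous and positive with $\underline{\mathcal E}:=\inf\mathcal E$ and $\overline{\mathcal E}:=\sup\mathcal E$ finite, and let $\lambda\ge0$, $\sigma\ge0$, $\alpha>0$, $C_{\alpha,\mathcal E}:=e^{\alpha(\overline{\mathcal E}-\underline{\mathcal E})}$. Let $f(v,t)$ be a family of probability densities on $\mathbb R^d$ (with finite second moments) solving the Boltzmann-type equation with macroscopic best estimate only, described in the context. Then for all $t>0$ $$V(t)\le V(0)\exp\big(-(2\lambda-\lambda^2C_{\alpha,\mathcal E}-\sigma^2\kappa C_{\alpha,\mathcal E})t\big).$$ Therefore $V(t)\to0$ as $t\to\infty$ if $\sigma^2<\frac{\lambda}{\kappa}\big(\frac{2}{C_{\alpha,\mathcal E}}-\lambda\big)$.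
   Context: Let $v_{\alpha,\mathcal E}(t):=\frac{\int v e^{-\alpha\mathcal E(v)}f(v,t)\,dv}{\int e^{-\alpha\mathcal E(v)}f(v,t)\,dv}$. The binary interaction is $v'=v+\lambda(v_{\alpha,\mathcal E}(t)-v)+\sigma D(v)\xi$, where $\xi\in\mathbb R^d$ is a random vector of i.i.d. components with zero mean and unit variance, and $D(v)$ is diagonal, either isotropic $D(v)=\|v_{\alpha,\mathcal E}(t)-v\|_2I_d$ (then $\kappa:=d$) or anisotropic $D(v)=\mathrm{diag}\{(v_{\alpha,\mathcal E}(t)-v)_1,\dots,(v_{\alpha,\mathcal E}(t)-v)_d\}$ (then $\kappa:=1$). The density $f$ satisfies, for test functions $\phi$ (including $\phi(v)=v$ and $\phi(v)=|v|^2$), $$\frac{d}{dt}\int f(v,t)\phi(v)\,dv=\Big\langle\int_{\mathbb R^{2d}}(\phi(v')-\phi(v))f(v,t)f(v_*,t)\,dv\,dv_*\Big\rangle,$$ with $\langle\cdot\rangle$ the expectation over the random vector. Here $m(t):=\int vf(v,t)\,dv$ and $V(t):=\frac12\int|v-m(t)|^2f(v,t)\,dv$. *)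

theory Defs
  imports "HOL-Probability.Probability"
begin

datatype diffusion = Isotropic | Anisotropic

definition kappa :: "diffusion \<Rightarrow> nat \<Rightarrow> real" where
  "kappa D d = (case D of Isotropic \<Rightarrow> real d | Anisotropic \<Rightarrow> 1)"

text \<open>D(v) xi, where w = v_alpha - v.\<close>
definition noise :: "diffusion \<Rightarrow> real^'d \<Rightarrow> real^'d \<Rightarrow> real^'d" where
  "noise D w xi = (case D of Isotropic \<Rightarrow> norm w *\<^sub>R xi
                             | Anisotropic \<Rightarrow> (\<chi> i. w $ i * xi $ i))"

definition v_alpha :: "real \<Rightarrow> (real^'d \<Rightarrow> real) \<Rightarrow> (real^'d \<Rightarrow> real) \<Rightarrow> real^'d" where
  "v_alpha alpha E g =
     (LINT v|lborel. (exp (- alpha * E v) * g v) *\<^sub>R v) /\<^sub>R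
     (LINT v|lborel. exp (- alpha * E v) * g v)"

definition post :: "real \<Rightarrow> real \<Rightarrow> diffusion \<Rightarrow> real^'d \<Rightarrow> real^'d \<Rightarrow> real^'d \<Rightarrow> real^'d" where
  "post lam sig D va v xi = v + lam *\<^sub>R (va - v) + sig *\<^sub>R noise D (va - v) xi"

definition collision_rhs ::
  "real \<Rightarrow> real \<Rightarrow> diffusion \<Rightarrow> real \<Rightarrow> (real^'d \<Rightarrow> real) \<Rightarrow> (real^'d) measure
   \<Rightarrow> (real^'d \<Rightarrow> real) \<Rightarrow> (real^'d \<Rightarrow> 'b::{banach,second_countable_topology}) \<Rightarrow> 'b" where
  "collision_rhs lam sig D alpha E Xi g phi =
     (LINT xi|Xi. (LINT p|(lborel \<Otimes>\<^sub>M lborel).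
        (g (fst p) * g (snd p)) *\<^sub>R
          (phi (post lam sig D (v_alpha alpha E g) (fst p) xi) - phi (fst p))))"

definition mean :: "(real^'d \<Rightarrow> real) \<Rightarrow> real^'d" where
  "mean g = (LINT v|lborel. g v *\<^sub>R v)"

definition Var :: "(real^'d \<Rightarrow> real) \<Rightarrow> real" where
  "Var g = 1/2 * (LINT v|lborel. (norm (v - mean g))\<^sup>2 * g v)"

end

theory Submission
  imports Defs "HOL-Real_Asymp.Real_Asymp"
begin

lemma integrable_cart:
  fixes f :: "'a \<Rightarrow> real^'n"
  assumes "\<And>i. integrable M (\<lambda>x. f x $ i)"
  shows "integrable M f"
proof -
  have eq: "f = (\<lambda>x. \<Sum>i\<in>UNIV. (f x $ i) *\<^sub>R axis i (1::real))"
  proof (rule ext)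
    fix x show "f x = (\<Sum>i\<in>UNIV. (f x $ i) *\<^sub>R axis i (1::real))"
      using basis_expansion[of "f x"] by (simp add: scalar_mult_eq_scaleR)
  qed
  have "integrable M (\<lambda>x. \<Sum>i\<in>UNIV. (f x $ i) *\<^sub>R axis i (1::real))"
    using assms by simp
  then show ?thesis by (simp only: eq[symmetric])
qed

lemma integral_cart:
  fixes f :: "'a \<Rightarrow> real^'n"
  assumes "integrable M f"
  shows "integral\<^sup>L M f $ i = integral\<^sup>L M (\<lambda>x. f x $ i)"
  using integral_bounded_linear[OF bounded_linear_vec_nth assms] by simp

lemma prod_integral:
  fixes F :: "'a \<Rightarrow> 'b::{banach,second_countable_topology}" and g :: "'c \<Rightarrow> real"
  assumes M1: "sigma_finite_measure M1" and M2: "sigma_finite_measure M2"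
    and F: "integrable M1 F" and g: "integrable M2 g"
  shows "integrable (M1 \<Otimes>\<^sub>M M2) (\<lambda>p. g (snd p) *\<^sub>R F (fst p))"
    and "integral\<^sup>L (M1 \<Otimes>\<^sub>M M2) (\<lambda>p. g (snd p) *\<^sub>R F (fst p)) = integral\<^sup>L M2 g *\<^sub>R integral\<^sup>L M1 F"
proof -
  interpret pair_sigma_finite M1 M2 using M1 M2 by (simp add: pair_sigma_finite_def)
  have [measurable]: "F \<in> borel_measurable M1" "g \<in> borel_measurable M2" using F g by auto
  have int: "integrable (M1 \<Otimes>\<^sub>M M2) (\<lambda>p. g (snd p) *\<^sub>R F (fst p))"
  proof (rule Fubini_integrable)
    show "(\<lambda>p. g (snd p) *\<^sub>R F (fst p)) \<in> borel_measurable (M1 \<Otimes>\<^sub>M M2)" by measurable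
    have "(\<lambda>x. \<integral> y. norm (g (snd (x, y)) *\<^sub>R F (fst (x, y))) \<partial>M2) = (\<lambda>x. (\<integral> y. norm (g y) \<partial>M2) * norm (F x))"
      by (simp add: mult.commute)
    then show "integrable M1 (\<lambda>x. \<integral> y. norm (g (snd (x, y)) *\<^sub>R F (fst (x, y))) \<partial>M2)"
      using F by (simp add: integrable_norm)
    show "AE x in M1. integrable M2 (\<lambda>y. g (snd (x, y)) *\<^sub>R F (fst (x, y)))"
      using g by simp
  qed
  then show "integrable (M1 \<Otimes>\<^sub>M M2) (\<lambda>p. g (snd p) *\<^sub>R F (fst p))" .
  have "integral\<^sup>L (M1 \<Otimes>\<^sub>M M2) (\<lambda>p. g (snd p) *\<^sub>R F (fst p)) = (\<integral>x. (\<integral>y. g y *\<^sub>R F x \<partial>M2) \<partial>M1)"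
    using integral_fst[of "\<lambda>x y. g y *\<^sub>R F x"] int by (simp add: split_beta')
  also have "\<dots> = integral\<^sup>L M2 g *\<^sub>R integral\<^sup>L M1 F"
    using g by (simp add: integral_scaleR_left)
  finally show "integral\<^sup>L (M1 \<Otimes>\<^sub>M M2) (\<lambda>p. g (snd p) *\<^sub>R F (fst p)) = integral\<^sup>L M2 g *\<^sub>R integral\<^sup>L M1 F" .
qed

definition nk :: "diffusion \<Rightarrow> real^'d \<Rightarrow> 'd \<Rightarrow> real" where
  "nk D w i = (case D of Isotropic \<Rightarrow> norm w | Anisotropic \<Rightarrow> w $ i)"

lemma noise_nth: "noise D w xi $ i = nk D w i * xi $ i"
  by (cases D) (simp_all add: noise_def nk_def)

lemma nk_bound: "\<bar>nk D w i\<bar> \<le> norm w"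
  by (cases D) (auto simp: nk_def component_le_norm_cart)

lemma norm_sq_cart: fixes w :: "real^'d" shows "(norm w)\<^sup>2 = (\<Sum>i\<in>UNIV. (w $ i)\<^sup>2)"
  unfolding power2_norm_eq_inner inner_vec_def by (simp add: power2_eq_square)

lemma nk_sq_sum: fixes w :: "real^'d" shows "(\<Sum>i\<in>UNIV. (nk D w i)\<^sup>2) = kappa D CARD('d) * (norm w)\<^sup>2"
  by (cases D) (simp_all add: nk_def kappa_def norm_sq_cart)

lemma nk_meas[measurable]: "(\<lambda>v. nk D (a - v) i) \<in> borel_measurable lborel"
  by (cases D) (simp_all add: nk_def)

lemma diff_bound: "norm (a - v) \<le> (1 + norm a) * (1 + norm (v::real^'d))"
proof -
  have "norm (a - v) \<le> norm a + norm v" by (rule norm_triangle_ineq4)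
  also have "\<dots> \<le> (1 + norm a) * (1 + norm v)" by (simp add: algebra_simps)
  finally show ?thesis .
qed


context
  fixes g :: "real^'d \<Rightarrow> real"
  assumes g_meas[measurable]: "g \<in> borel_measurable lborel"
    and g_nn: "\<And>v. g v \<ge> 0"
    and g_int: "integrable lborel g"
    and g_mass: "(LINT v|lborel. (g v)) = 1"
    and g_mom: "integrable lborel (\<lambda>v. (norm v)\<^sup>2 * g v)"
begin

lemma g_w_int: "integrable lborel (\<lambda>v. g v * (1 + norm v)\<^sup>2)"
proof (rule Bochner_Integration.integrable_bound)
  show "integrable lborel (\<lambda>v. 2 * g v + 2 * ((norm v)\<^sup>2 * g v))"
    using g_int g_mom by auto
  show "(\<lambda>v. g v * (1 + norm v)\<^sup>2) \<in> borel_measurable lborel" by measurable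
  show "AE v in lborel. norm (g v * (1 + norm v)\<^sup>2) \<le> norm (2 * g v + 2 * ((norm v)\<^sup>2 * g v))"
  proof (rule AE_I2)
    fix v :: "real^'d"
    have "(1 + norm v)\<^sup>2 \<le> 2 + 2 * (norm v)\<^sup>2"
      using zero_le_power2[of "norm v - 1"] by (simp add: power2_sum power2_diff)
    then have "g v * (1 + norm v)\<^sup>2 \<le> g v * (2 + 2 * (norm v)\<^sup>2)"
      by (rule mult_left_mono) (rule g_nn)
    then show "norm (g v * (1 + norm v)\<^sup>2) \<le> norm (2 * g v + 2 * ((norm v)\<^sup>2 * g v))"
      using g_nn[of v] by (simp add: algebra_simps)
  qed
qed

lemma int_bound_vec:
  fixes P :: "real^'d \<Rightarrow> 'b::{banach,second_countable_topology}"
  assumes [measurable]: "P \<in> borel_measurable lborel"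
    and bnd: "\<And>v. norm (P v) \<le> K * (1 + norm v)\<^sup>2"
  shows "integrable lborel (\<lambda>v. g v *\<^sub>R P v)"
proof (rule Bochner_Integration.integrable_bound)
  show "integrable lborel (\<lambda>v. K * (g v * (1 + norm v)\<^sup>2))"
    using g_w_int by auto
  show "(\<lambda>v. g v *\<^sub>R P v) \<in> borel_measurable lborel" by measurable
  show "AE v in lborel. norm (g v *\<^sub>R P v) \<le> norm (K * (g v * (1 + norm v)\<^sup>2))"
  proof (rule AE_I2)
    fix v :: "real^'d"
    have "g v * norm (P v) \<le> g v * (K * (1 + norm v)\<^sup>2)"
      by (rule mult_left_mono[OF bnd g_nn])
    also have "\<dots> \<le> \<bar>K * (g v * (1 + norm v)\<^sup>2)\<bar>" by (simp add: algebra_simps)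
    finally show "norm (g v *\<^sub>R P v) \<le> norm (K * (g v * (1 + norm v)\<^sup>2))"
      using g_nn[of v] by simp
  qed
qed

lemma int_bound:
  fixes P :: "real^'d \<Rightarrow> real"
  assumes "P \<in> borel_measurable lborel"
    and "\<And>v. \<bar>P v\<bar> \<le> K * (1 + norm v)\<^sup>2"
  shows "integrable lborel (\<lambda>v. g v * P v)"
  using int_bound_vec[of P K] assms by simp

lemma one_le_sq: "1 \<le> (1 + norm (v::real^'d))\<^sup>2"
  using norm_ge_zero[of v] by (simp add: power2_sum)

lemma norm_le_sq: "norm (v::real^'d) \<le> (1 + norm v)\<^sup>2"
  using norm_ge_zero[of v] by (simp add: power2_sum)

lemma int_v: "integrable lborel (\<lambda>v. g v *\<^sub>R v)"
  by (rule int_bound_vec[where K=1]) (auto simp: norm_le_sq)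

lemma int_sq: "integrable lborel (\<lambda>v. g v * (norm v)\<^sup>2)"
  using g_mom by (simp add: mult.commute)

lemma lin_le_sq: "1 + norm (v::real^'d) \<le> (1 + norm v)\<^sup>2"
  using norm_ge_zero[of v] by (simp add: power2_sum)

lemma diff_bound2: "norm (a - v) \<le> (1 + norm a) * (1 + norm (v::real^'d))\<^sup>2"
proof -
  have "norm (a - v) \<le> (1 + norm a) * (1 + norm v)" by (rule diff_bound)
  also have "\<dots> \<le> (1 + norm a) * (1 + norm v)\<^sup>2"
    by (rule mult_left_mono[OF lin_le_sq]) simp
  finally show ?thesis .
qed

lemma int_nk: "integrable lborel (\<lambda>v. g v * nk D (a - v) i)"
proof (rule int_bound[where K="1 + norm a"])
  show "(\<lambda>v. nk D (a - v) i) \<in> borel_measurable lborel" by measurable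
  fix v :: "real^'d"
  show "\<bar>nk D (a - v) i\<bar> \<le> (1 + norm a) * (1 + norm v)\<^sup>2"
    using nk_bound[of D "a - v" i] diff_bound2[of a v] by linarith
qed

lemma int_noise: "integrable lborel (\<lambda>v. g v *\<^sub>R noise D (a - v) xi)"
proof (rule integrable_cart)
  fix i
  have "integrable lborel (\<lambda>v. (g v * nk D (a - v) i) * xi $ i)"
    using int_nk[of D a i] by simp
  then show "integrable lborel (\<lambda>v. (g v *\<^sub>R noise D (a - v) xi) $ i)"
    by (simp add: noise_nth mult.assoc)
qed

lemma C1:
  assumes Xp: "prob_space Xi"
    and Xm: "\<And>i. integrable Xi (\<lambda>x. x $ i) \<and> (LINT x|Xi. x $ i) = 0"
  shows "collision_rhs lam sig D alpha E Xi g (\<lambda>v. v) = lam *\<^sub>R (v_alpha alpha E g - mean g)"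
proof -
  define a where "a = v_alpha alpha E g"
  define m where "m = mean g"
  define c where "c i = (LINT v|lborel. (g v * nk D (a - v) i))" for i
  have inner: "(LINT p|(lborel \<Otimes>\<^sub>M lborel). (g (fst p) * g (snd p)) *\<^sub>R (post lam sig D a (fst p) xi - fst p))
      = lam *\<^sub>R (a - m) + sig *\<^sub>R (\<chi> i. c i * xi $ i)" for xi :: "real^'d"
  proof -
    have Nint: "integrable lborel (\<lambda>v. g v *\<^sub>R noise D (a - v) xi)" by (rule int_noise)
    have Feq: "(\<lambda>v. g v *\<^sub>R (post lam sig D a v xi - v)) =
        (\<lambda>v. lam *\<^sub>R (g v *\<^sub>R a - g v *\<^sub>R v) + sig *\<^sub>R (g v *\<^sub>R noise D (a - v) xi))"
      by (rule ext) (simp add: post_def algebra_simps)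
    have i1: "integrable lborel (\<lambda>v. lam *\<^sub>R (g v *\<^sub>R a - g v *\<^sub>R v))"
      using int_v g_int by auto
    have i2: "integrable lborel (\<lambda>v. sig *\<^sub>R (g v *\<^sub>R noise D (a - v) xi))"
      by (rule integrable_scaleR_right[OF Nint])
    have Fint: "integrable lborel (\<lambda>v. g v *\<^sub>R (post lam sig D a v xi - v))"
      unfolding Feq using i1 i2 by (rule Bochner_Integration.integrable_add)
    have "(LINT p|(lborel \<Otimes>\<^sub>M lborel). (g (fst p) * g (snd p)) *\<^sub>R (post lam sig D a (fst p) xi - fst p))
       = (LINT p|(lborel \<Otimes>\<^sub>M lborel). g (snd p) *\<^sub>R (g (fst p) *\<^sub>R (post lam sig D a (fst p) xi - fst p)))"
      by (simp add: mult.commute)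
    also have "\<dots> = (LINT v|lborel. (g v)) *\<^sub>R (LINT v|lborel. (g v *\<^sub>R (post lam sig D a v xi - v)))"
      by (rule prod_integral(2)[OF sigma_finite_lborel sigma_finite_lborel Fint g_int])
    also have "\<dots> = (LINT v|lborel. (g v *\<^sub>R (post lam sig D a v xi - v)))"
      using g_mass by simp
    also have "\<dots> = (LINT v|lborel. (lam *\<^sub>R (g v *\<^sub>R a - g v *\<^sub>R v))) + (LINT v|lborel. (sig *\<^sub>R (g v *\<^sub>R noise D (a - v) xi)))"
      unfolding Feq by (rule Bochner_Integration.integral_add[OF i1 i2])
    also have "(LINT v|lborel. (lam *\<^sub>R (g v *\<^sub>R a - g v *\<^sub>R v))) = lam *\<^sub>R (a - m)"
    proof -
      have "(LINT v|lborel. (lam *\<^sub>R (g v *\<^sub>R a - g v *\<^sub>R v))) = lam *\<^sub>R ((LINT v|lborel. (g v *\<^sub>R a)) - (LINT v|lborel. (g v *\<^sub>R v)))"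
        using int_v g_int by (simp add: integral_diff)
      also have "(LINT v|lborel. (g v *\<^sub>R a)) = a"
        using g_int g_mass by (simp add: integral_scaleR_left)
      finally show ?thesis by (simp add: m_def mean_def)
    qed
    also have "(LINT v|lborel. (sig *\<^sub>R (g v *\<^sub>R noise D (a - v) xi))) = sig *\<^sub>R (\<chi> i. c i * xi $ i)"
    proof -
      have vN: "(LINT v|lborel. (g v *\<^sub>R noise D (a - v) xi)) = (\<chi> i. c i * xi $ i)"
      proof (subst vec_eq_iff, intro allI)
        fix i
        have "(LINT v|lborel. (g v *\<^sub>R noise D (a - v) xi)) $ i = (LINT v|lborel. ((g v * nk D (a - v) i) * xi $ i))"
          by (simp add: integral_cart[OF Nint] noise_nth mult.assoc)
        also have "\<dots> = c i * xi $ i" by (simp add: c_def)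
        finally show "(LINT v|lborel. (g v *\<^sub>R noise D (a - v) xi)) $ i = (\<chi> i. c i * xi $ i) $ i" by simp
      qed
      show ?thesis by (simp only: integral_scaleR_right vN)
    qed
    finally show ?thesis .
  qed
  have "collision_rhs lam sig D alpha E Xi g (\<lambda>v. v) = (LINT xi|Xi. (lam *\<^sub>R (a - m) + sig *\<^sub>R (\<chi> i. c i * xi $ i)))"
    unfolding collision_rhs_def a_def[symmetric] using inner by simp
  also have "\<dots> = lam *\<^sub>R (a - m)"
  proof -
    have vi: "integrable Xi (\<lambda>xi. (\<chi> i. c i * xi $ i))"
      by (rule integrable_cart) (use Xm in simp)
    have v0: "(LINT xi|Xi. ((\<chi> i. c i * xi $ i))) = 0"
    proof (subst vec_eq_iff, intro allI)
      fix i
      show "(LINT xi|Xi. ((\<chi> i. c i * xi $ i))) $ i = 0 $ i"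
        using Xm[of i] by (simp add: integral_cart[OF vi])
    qed
    have "(LINT xi|Xi. (lam *\<^sub>R (a - m) + sig *\<^sub>R (\<chi> i. c i * xi $ i)))
       = (LINT xi|Xi. (lam *\<^sub>R (a - m))) + (LINT xi|Xi. (sig *\<^sub>R (\<chi> i. c i * xi $ i)))"
      by (rule Bochner_Integration.integral_add) (use vi finite_measure.integrable_const[OF prob_space.finite_measure[OF Xp]] in auto)
    also have "\<dots> = lam *\<^sub>R (a - m)"
      using v0 prob_space.prob_space[OF Xp] by simp
    finally show ?thesis .
  qed
  finally show ?thesis by (simp add: a_def m_def)
qed

lemma Var_eq: "Var g = 1/2 * ((LINT v|lborel. (g v * (norm v)\<^sup>2)) - (norm (mean g))\<^sup>2)"
proof -
  define m where "m = mean g"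
  have eq: "(\<lambda>v. (norm (v - m))\<^sup>2 * g v) = (\<lambda>v. (g v * (norm v)\<^sup>2 - 2 * ((g v *\<^sub>R v) \<bullet> m)) + (norm m)\<^sup>2 * g v)"
    by (rule ext) (simp add: power2_norm_eq_inner inner_diff_left inner_diff_right inner_commute algebra_simps)
  have "(LINT v|lborel. ((norm (v - m))\<^sup>2 * g v)) = ((LINT v|lborel. (g v * (norm v)\<^sup>2)) - 2 * ((LINT v|lborel. (g v *\<^sub>R v)) \<bullet> m)) + (norm m)\<^sup>2 * (LINT v|lborel. (g v))"
  proof -
    have i1: "integrable lborel (\<lambda>v. g v * (norm v)\<^sup>2)" by (rule int_sq)
    have i2: "integrable lborel (\<lambda>v. 2 * ((g v *\<^sub>R v) \<bullet> m))"
      using int_v by (intro integrable_mult_right integrable_inner_left) 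
    have i3: "integrable lborel (\<lambda>v. (norm m)\<^sup>2 * g v)" using g_int by (rule integrable_mult_right)
    have "(LINT v|lborel. ((norm (v - m))\<^sup>2 * g v)) = (LINT v|lborel. (g v * (norm v)\<^sup>2)) - (LINT v|lborel. (2 * ((g v *\<^sub>R v) \<bullet> m))) + (LINT v|lborel. ((norm m)\<^sup>2 * g v))"
      unfolding eq by (simp only: Bochner_Integration.integral_add[OF Bochner_Integration.integrable_diff[OF i1 i2] i3] Bochner_Integration.integral_diff[OF i1 i2])
    also have "(LINT v|lborel. (2 * ((g v *\<^sub>R v) \<bullet> m))) = 2 * ((LINT v|lborel. (g v *\<^sub>R v)) \<bullet> m)"
      by (simp only: integral_mult_right_zero integral_inner_left[OF int_v])
    also have "(LINT v|lborel. ((norm m)\<^sup>2 * g v)) = (norm m)\<^sup>2 * (LINT v|lborel. (g v))"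
      by (simp only: integral_mult_right_zero)
    finally show ?thesis .
  qed
  also have "\<dots> = (LINT v|lborel. (g v * (norm v)\<^sup>2)) - (norm m)\<^sup>2"
    using g_mass by (simp add: m_def[symmetric] mean_def[symmetric] power2_norm_eq_inner)
  finally show ?thesis by (simp add: Var_def m_def)
qed

lemma int_dsq: "integrable lborel (\<lambda>v. g v * (norm (a - v))\<^sup>2)"
proof (rule int_bound[where K="(1 + norm a)\<^sup>2"])
  show "(\<lambda>v. (norm (a - v))\<^sup>2) \<in> borel_measurable lborel" by measurable
  fix v :: "real^'d"
  have "(norm (a - v))\<^sup>2 \<le> ((1 + norm a) * (1 + norm v))\<^sup>2"
    by (rule power_mono[OF diff_bound]) simp
  then show "\<bar>(norm (a - v))\<^sup>2\<bar> \<le> (1 + norm a)\<^sup>2 * (1 + norm v)\<^sup>2"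
    by (simp add: power_mult_distrib)
qed

lemma int_vw: "integrable lborel (\<lambda>v. g v * (v \<bullet> w))"
  using integrable_inner_left[OF int_v, of w] by simp

lemma int_q: "integrable lborel (\<lambda>v. g v * ((v + lam *\<^sub>R (a - v)) $ i * nk D (a - v) i))"
proof (rule int_bound[where K="(1 + \<bar>lam\<bar>) * (1 + norm a)\<^sup>2"])
  show "(\<lambda>v. (v + lam *\<^sub>R (a - v)) $ i * nk D (a - v) i) \<in> borel_measurable lborel"
    unfolding measurable_lborel2
    by (rule borel_measurable_continuous_onI) (cases D, simp_all add: nk_def, (intro continuous_intros)+)
  fix v :: "real^'d"
  have d: "norm (a - v) \<le> (1 + norm a) * (1 + norm v)" by (rule diff_bound)
  have nv: "norm v \<le> (1 + norm a) * (1 + norm v)"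
    using mult_nonneg_nonneg[of "norm a" "1 + norm v"] by (simp add: algebra_simps)
  have b1: "\<bar>(v + lam *\<^sub>R (a - v)) $ i\<bar> \<le> (1 + \<bar>lam\<bar>) * ((1 + norm a) * (1 + norm v))"
  proof -
    have "\<bar>(v + lam *\<^sub>R (a - v)) $ i\<bar> \<le> norm (v + lam *\<^sub>R (a - v))" by (rule component_le_norm_cart)
    also have "\<dots> \<le> norm v + \<bar>lam\<bar> * norm (a - v)"
      using norm_triangle_ineq[of v "lam *\<^sub>R (a - v)"] by simp
    also have "\<dots> \<le> (1 + norm a) * (1 + norm v) + \<bar>lam\<bar> * ((1 + norm a) * (1 + norm v))"
      using nv mult_left_mono[OF d, of "\<bar>lam\<bar>"] by simp
    finally show ?thesis by (simp add: algebra_simps)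
  qed
  have b2: "\<bar>nk D (a - v) i\<bar> \<le> (1 + norm a) * (1 + norm v)"
    using nk_bound[of D "a - v" i] d by linarith
  have "\<bar>(v + lam *\<^sub>R (a - v)) $ i * nk D (a - v) i\<bar> \<le> ((1 + \<bar>lam\<bar>) * ((1 + norm a) * (1 + norm v))) * ((1 + norm a) * (1 + norm v))"
    unfolding abs_mult by (rule mult_mono[OF b1 b2]) simp_all
  also have "\<dots> = (1 + \<bar>lam\<bar>) * (1 + norm a)\<^sup>2 * (1 + norm v)\<^sup>2"
    by (simp add: power2_eq_square algebra_simps)
  finally show "\<bar>(v + lam *\<^sub>R (a - v)) $ i * nk D (a - v) i\<bar> \<le> (1 + \<bar>lam\<bar>) * (1 + norm a)\<^sup>2 * (1 + norm v)\<^sup>2" .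
qed

lemma int_r: "integrable lborel (\<lambda>v. g v * (nk D (a - v) i)\<^sup>2)"
proof (rule int_bound[where K="(1 + norm a)\<^sup>2"])
  show "(\<lambda>v. (nk D (a - v) i)\<^sup>2) \<in> borel_measurable lborel" by measurable
  fix v :: "real^'d"
  have "\<bar>nk D (a - v) i\<bar> \<le> (1 + norm a) * (1 + norm v)"
    using nk_bound[of D "a - v" i] diff_bound[of a v] by linarith
  then have "\<bar>nk D (a - v) i\<bar>\<^sup>2 \<le> ((1 + norm a) * (1 + norm v))\<^sup>2"
    by (rule power_mono) simp
  then show "\<bar>(nk D (a - v) i)\<^sup>2\<bar> \<le> (1 + norm a)\<^sup>2 * (1 + norm v)\<^sup>2"
    by (simp add: power_mult_distrib)
qed

lemma C2:
  assumes Xp: "prob_space Xi"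
    and Xm: "\<And>i. integrable Xi (\<lambda>x. x $ i) \<and> (LINT x|Xi. x $ i) = 0"
    and Xv: "\<And>i. integrable Xi (\<lambda>x. (x $ i)\<^sup>2) \<and> prob_space.variance Xi (\<lambda>x. x $ i) = 1"
  shows "collision_rhs lam sig D alpha E Xi g (\<lambda>v. (norm v)\<^sup>2) =
    2 * lam * (v_alpha alpha E g \<bullet> mean g - (LINT v|lborel. (g v * (norm v)\<^sup>2)))
    + (lam\<^sup>2 + sig\<^sup>2 * kappa D CARD('d)) * (LINT v|lborel. (g v * (norm (v_alpha alpha E g - v))\<^sup>2))"
proof -
  define a where "a = v_alpha alpha E g"
  define m where "m = mean g"
  define En where "En = (LINT v|lborel. (g v * (norm v)\<^sup>2))"
  define J where "J = (LINT v|lborel. (g v * (norm (a - v))\<^sup>2))"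
  define P where "P v = 2 * lam * (v \<bullet> a - (norm v)\<^sup>2) + lam\<^sup>2 * (norm (a - v))\<^sup>2" for v :: "real^'d"
  define q where "q i v = 2 * sig * ((v + lam *\<^sub>R (a - v)) $ i * nk D (a - v) i)" for i v
  define r where "r i v = sig\<^sup>2 * (nk D (a - v) i)\<^sup>2" for i v
  define H where "H xi v = g v * P v + (\<Sum>i\<in>UNIV. xi $ i * (g v * q i v)) + (\<Sum>i\<in>UNIV. (xi $ i)\<^sup>2 * (g v * r i v))"
    for xi v :: "real^'d"
  define A where "A = (LINT v|lborel. (g v * P v))"
  define Q where "Q i = (LINT v|lborel. (g v * q i v))" for i
  define R where "R i = (LINT v|lborel. (g v * r i v))" for i
  have expand: "(norm (post lam sig D a v xi))\<^sup>2 - (norm v)\<^sup>2 = P v + (\<Sum>i\<in>UNIV. xi $ i * q i v) + (\<Sum>i\<in>UNIV. (xi $ i)\<^sup>2 * r i v)"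
    for v xi
  proof -
    define u where "u = v + lam *\<^sub>R (a - v)"
    define N where "N = noise D (a - v) xi"
    have pu: "post lam sig D a v xi = u + sig *\<^sub>R N" by (simp add: post_def u_def N_def)
    have e1: "(norm (u + sig *\<^sub>R N))\<^sup>2 = (norm u)\<^sup>2 + 2 * sig * (u \<bullet> N) + sig\<^sup>2 * (N \<bullet> N)"
      unfolding power2_norm_eq_inner by (simp add: inner_add_left inner_add_right inner_commute algebra_simps power2_eq_square)
    have e2: "(norm u)\<^sup>2 = (norm v)\<^sup>2 + P v"
      unfolding u_def P_def power2_norm_eq_inner by (simp add: inner_add_left inner_add_right inner_diff_left inner_diff_right inner_commute algebra_simps power2_eq_square)
    have e3: "u \<bullet> N = (\<Sum>i\<in>UNIV. u $ i * (nk D (a - v) i * xi $ i))"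
      by (simp add: inner_vec_def N_def noise_nth)
    have e4: "N \<bullet> N = (\<Sum>i\<in>UNIV. (nk D (a - v) i * xi $ i)\<^sup>2)"
      by (simp add: inner_vec_def N_def noise_nth power2_eq_square)
    have e5: "(\<Sum>i\<in>UNIV. xi $ i * q i v) = 2 * sig * (u \<bullet> N)"
      by (subst e3) (simp add: q_def u_def sum_distrib_left mult_ac)
    have e6: "(\<Sum>i\<in>UNIV. (xi $ i)\<^sup>2 * r i v) = sig\<^sup>2 * (N \<bullet> N)"
      by (simp add: e4 r_def sum_distrib_left power_mult_distrib mult_ac)
    show ?thesis by (simp add: pu e1 e2 e5 e6)
  qed
  have Peq: "(\<lambda>v. g v * P v) = (\<lambda>v. 2 * lam * (g v * (v \<bullet> a) - g v * (norm v)\<^sup>2) + lam\<^sup>2 * (g v * (norm (a - v))\<^sup>2))"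
    by (rule ext) (simp add: P_def algebra_simps)
  have iP: "integrable lborel (\<lambda>v. g v * P v)"
    unfolding Peq
    by (intro Bochner_Integration.integrable_add Bochner_Integration.integrable_diff integrable_mult_right int_vw int_sq int_dsq)
  have iq: "integrable lborel (\<lambda>v. g v * q i v)" for i
  proof -
    have "(\<lambda>v. g v * q i v) = (\<lambda>v. (2 * sig) * (g v * ((v + lam *\<^sub>R (a - v)) $ i * nk D (a - v) i)))"
      by (rule ext) (simp add: q_def mult_ac)
    then show ?thesis by (simp only:) (intro integrable_mult_right int_q)
  qed
  have ir: "integrable lborel (\<lambda>v. g v * r i v)" for i
  proof -
    have "(\<lambda>v. g v * r i v) = (\<lambda>v. sig\<^sup>2 * (g v * (nk D (a - v) i)\<^sup>2))"
      by (rule ext) (simp add: r_def mult_ac)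
    then show ?thesis by (simp only:) (intro integrable_mult_right int_r)
  qed
  have Heq: "g v * ((norm (post lam sig D a v xi))\<^sup>2 - (norm v)\<^sup>2) = H xi v" for v xi
    by (simp add: expand H_def sum_distrib_left distrib_left mult_ac)
  have Hint: "integrable lborel (H xi)" for xi
    unfolding H_def using iP iq ir by simp
  have HI: "(LINT v|lborel. (H xi v)) = A + (\<Sum>i\<in>UNIV. xi $ i * Q i) + (\<Sum>i\<in>UNIV. (xi $ i)\<^sup>2 * R i)" for xi
  proof -
    have s1: "integrable lborel (\<lambda>v. \<Sum>i\<in>UNIV. xi $ i * (g v * q i v))"
      using iq by simp
    have s2: "integrable lborel (\<lambda>v. \<Sum>i\<in>UNIV. (xi $ i)\<^sup>2 * (g v * r i v))"
      using ir by simp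
    have "(LINT v|lborel. (H xi v)) = A + (LINT v|lborel. (\<Sum>i\<in>UNIV. xi $ i * (g v * q i v))) + (LINT v|lborel. (\<Sum>i\<in>UNIV. (xi $ i)\<^sup>2 * (g v * r i v)))"
      unfolding H_def A_def
      by (simp only: Bochner_Integration.integral_add[OF Bochner_Integration.integrable_add[OF iP s1] s2]
                     Bochner_Integration.integral_add[OF iP s1])
    also have "(LINT v|lborel. (\<Sum>i\<in>UNIV. xi $ i * (g v * q i v))) = (\<Sum>i\<in>UNIV. xi $ i * Q i)"
      by (subst Bochner_Integration.integral_sum) (auto intro: iq simp: Q_def)
    also have "(LINT v|lborel. (\<Sum>i\<in>UNIV. (xi $ i)\<^sup>2 * (g v * r i v))) = (\<Sum>i\<in>UNIV. (xi $ i)\<^sup>2 * R i)"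
      by (subst Bochner_Integration.integral_sum) (auto intro: ir simp: R_def)
    finally show ?thesis .
  qed
  have inner: "(LINT p|(lborel \<Otimes>\<^sub>M lborel). (g (fst p) * g (snd p)) *\<^sub>R ((norm (post lam sig D a (fst p) xi))\<^sup>2 - (norm (fst p))\<^sup>2))
      = A + (\<Sum>i\<in>UNIV. xi $ i * Q i) + (\<Sum>i\<in>UNIV. (xi $ i)\<^sup>2 * R i)" for xi
  proof -
    have Fint: "integrable lborel (\<lambda>v. g v *\<^sub>R ((norm (post lam sig D a v xi))\<^sup>2 - (norm v)\<^sup>2))"
      using Hint[of xi] by (simp add: Heq)
    have "(LINT p|(lborel \<Otimes>\<^sub>M lborel). (g (fst p) * g (snd p)) *\<^sub>R ((norm (post lam sig D a (fst p) xi))\<^sup>2 - (norm (fst p))\<^sup>2))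
       = (LINT p|(lborel \<Otimes>\<^sub>M lborel). g (snd p) *\<^sub>R (g (fst p) *\<^sub>R ((norm (post lam sig D a (fst p) xi))\<^sup>2 - (norm (fst p))\<^sup>2)))"
      by (simp only: scaleR_scaleR mult.commute)
    also have "\<dots> = (LINT v|lborel. (g v)) *\<^sub>R (LINT v|lborel. (g v *\<^sub>R ((norm (post lam sig D a v xi))\<^sup>2 - (norm v)\<^sup>2)))"
      by (rule prod_integral(2)[OF sigma_finite_lborel sigma_finite_lborel Fint g_int])
    also have "\<dots> = (LINT v|lborel. (H xi v))"
      using g_mass by (simp add: Heq)
    finally show ?thesis using HI by simp
  qed
  have "collision_rhs lam sig D alpha E Xi g (\<lambda>v. (norm v)\<^sup>2) =
      (LINT xi|Xi. (A + (\<Sum>i\<in>UNIV. xi $ i * Q i) + (\<Sum>i\<in>UNIV. (xi $ i)\<^sup>2 * R i)))"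
    unfolding collision_rhs_def a_def[symmetric] using inner by (simp only:)
  also have "\<dots> = A + (\<Sum>i\<in>UNIV. R i)"
  proof -
    interpret X: prob_space Xi by (rule Xp)
    have x2: "(LINT x|Xi. (x $ i)\<^sup>2) = 1" for i using Xv[of i] Xm[of i] by simp
    have s1: "integrable Xi (\<lambda>xi. \<Sum>i\<in>UNIV. xi $ i * Q i)"
      using Xm by simp
    have s2: "integrable Xi (\<lambda>xi. \<Sum>i\<in>UNIV. (xi $ i)\<^sup>2 * R i)"
      using Xv by simp
    have "(LINT xi|Xi. (A + (\<Sum>i\<in>UNIV. xi $ i * Q i) + (\<Sum>i\<in>UNIV. (xi $ i)\<^sup>2 * R i)))
        = (LINT xi|Xi. (A)) + (LINT xi|Xi. (\<Sum>i\<in>UNIV. xi $ i * Q i)) + (LINT xi|Xi. (\<Sum>i\<in>UNIV. (xi $ i)\<^sup>2 * R i))"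
      by (simp only: Bochner_Integration.integral_add[OF Bochner_Integration.integrable_add[OF X.integrable_const s1] s2]
                     Bochner_Integration.integral_add[OF X.integrable_const s1])
    also have "(LINT xi|Xi. (\<Sum>i\<in>UNIV. xi $ i * Q i)) = 0"
      by (subst Bochner_Integration.integral_sum) (use Xm in auto)
    also have "(LINT xi|Xi. (\<Sum>i\<in>UNIV. (xi $ i)\<^sup>2 * R i)) = (\<Sum>i\<in>UNIV. R i)"
      by (subst Bochner_Integration.integral_sum) (use Xv x2 in auto)
    finally show ?thesis using X.prob_space by simp
  qed
  also have "A = 2 * lam * (m \<bullet> a - En) + lam\<^sup>2 * J"
  proof -
    have "A = 2 * lam * ((LINT v|lborel. (g v * (v \<bullet> a))) - En) + lam\<^sup>2 * J"
      unfolding A_def Peq En_def J_def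
      using int_vw[of a] int_sq int_dsq[of a]
      by (simp add: Bochner_Integration.integral_add Bochner_Integration.integral_diff)
    also have "(LINT v|lborel. (g v * (v \<bullet> a))) = m \<bullet> a"
    proof -
      have "(LINT v|lborel. (g v * (v \<bullet> a))) = (LINT v|lborel. ((g v *\<^sub>R v) \<bullet> a))" by simp
      also have "\<dots> = m \<bullet> a" by (simp only: integral_inner_left[OF int_v] m_def mean_def)
      finally show ?thesis .
    qed
    finally show ?thesis .
  qed
  also have "(\<Sum>i\<in>UNIV. R i) = sig\<^sup>2 * kappa D CARD('d) * J"
  proof -
    have "(\<Sum>i\<in>UNIV. R i) = (LINT v|lborel. (\<Sum>i\<in>UNIV. g v * r i v))"
      unfolding R_def by (subst Bochner_Integration.integral_sum) (auto intro: ir)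
    also have "\<dots> = (LINT v|lborel. (sig\<^sup>2 * kappa D CARD('d) * (g v * (norm (a - v))\<^sup>2)))"
    proof (rule Bochner_Integration.integral_cong[OF refl])
      fix v
      have "(\<Sum>i\<in>UNIV. g v * r i v) = g v * sig\<^sup>2 * (\<Sum>i\<in>UNIV. (nk D (a - v) i)\<^sup>2)"
        by (simp add: r_def sum_distrib_left mult_ac)
      then show "(\<Sum>i\<in>UNIV. g v * r i v) = sig\<^sup>2 * kappa D CARD('d) * (g v * (norm (a - v))\<^sup>2)"
        by (simp add: nk_sq_sum mult_ac)
    qed
    also have "\<dots> = sig\<^sup>2 * kappa D CARD('d) * J" by (simp add: J_def)
    finally show ?thesis .
  qed
  finally show ?thesis
    by (simp add: a_def[symmetric] m_def[symmetric] En_def[symmetric] J_def[symmetric] inner_commute algebra_simps)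
qed

lemma key_ineq:
  assumes Ec: "continuous_on UNIV E" and Ea: "bdd_above (range E)" and Eb: "bdd_below (range E)"
    and al: "alpha > 0"
  shows "(LINT v|lborel. g v * (norm (v_alpha alpha E g - v))\<^sup>2)
      \<le> exp (alpha * (Sup (range E) - Inf (range E))) * (2 * Var g)"
proof -
  define S where "S = Sup (range E)"
  define I where "I = Inf (range E)"
  define w where "w v = exp (- alpha * E v)" for v
  define elo where "elo = exp (- alpha * S)"
  define ehi where "ehi = exp (- alpha * I)"
  have Em[measurable]: "E \<in> borel_measurable lborel"
    using borel_measurable_continuous_onI[OF Ec] by simp
  have wm[measurable]: "w \<in> borel_measurable lborel" unfolding w_def by measurable
  have wlo: "elo \<le> w v" for v
  proof -
    have "E v \<le> S" unfolding S_def by (rule cSup_upper[OF rangeI Ea])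
    then show ?thesis using al by (simp add: w_def elo_def)
  qed
  have whi: "w v \<le> ehi" for v
  proof -
    have "I \<le> E v" unfolding I_def by (rule cInf_lower[OF rangeI Eb])
    then show ?thesis using al by (simp add: w_def ehi_def)
  qed
  have elo_pos: "0 < elo" by (simp add: elo_def)
  have ehi_pos: "0 \<le> ehi" by (simp add: ehi_def)
  have iw: "integrable lborel (\<lambda>v. g v * w v)"
  proof (rule int_bound[where K=ehi])
    fix v :: "real^'d"
    have "\<bar>w v\<bar> \<le> ehi" using whi[of v] wlo[of v] elo_pos by simp
    also have "\<dots> \<le> ehi * (1 + norm v)\<^sup>2" using mult_left_mono[OF one_le_sq ehi_pos] by simp
    finally show "\<bar>w v\<bar> \<le> ehi * (1 + norm v)\<^sup>2" .
  qed simp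
  have iwv: "integrable lborel (\<lambda>v. g v *\<^sub>R (w v *\<^sub>R v))"
  proof (rule int_bound_vec[where K=ehi])
    fix v :: "real^'d"
    have "norm (w v *\<^sub>R v) = w v * norm v" using wlo[of v] elo_pos by simp
    also have "\<dots> \<le> ehi * (1 + norm v)\<^sup>2"
      by (rule mult_mono[OF whi norm_le_sq ehi_pos]) simp
    finally show "norm (w v *\<^sub>R v) \<le> ehi * (1 + norm v)\<^sup>2" .
  qed simp
  have iwsq: "integrable lborel (\<lambda>v. g v * (w v * (norm v)\<^sup>2))"
  proof (rule int_bound[where K=ehi])
    fix v :: "real^'d"
    have "(norm v)\<^sup>2 \<le> (1 + norm v)\<^sup>2" by (rule power_mono) simp_all
    then have "w v * (norm v)\<^sup>2 \<le> ehi * (1 + norm v)\<^sup>2"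
      by (rule mult_mono[OF whi]) (simp_all add: ehi_pos)
    then show "\<bar>w v * (norm v)\<^sup>2\<bar> \<le> ehi * (1 + norm v)\<^sup>2" using wlo[of v] elo_pos by simp
  qed simp
  have iwx: "integrable lborel (\<lambda>v. g v * (w v * (norm (v - x))\<^sup>2))" for x
  proof (rule int_bound[where K="ehi * (1 + norm x)\<^sup>2"])
    show "(\<lambda>v. w v * (norm (v - x))\<^sup>2) \<in> borel_measurable lborel" by measurable
    fix v :: "real^'d"
    have "(norm (v - x))\<^sup>2 \<le> ((1 + norm x) * (1 + norm v))\<^sup>2"
      using power_mono[OF diff_bound[of x v]] by (simp add: norm_minus_commute)
    then have "w v * (norm (v - x))\<^sup>2 \<le> ehi * ((1 + norm x) * (1 + norm v))\<^sup>2"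
      by (rule mult_mono[OF whi]) (simp_all add: ehi_pos)
    then show "\<bar>w v * (norm (v - x))\<^sup>2\<bar> \<le> ehi * (1 + norm x)\<^sup>2 * (1 + norm v)\<^sup>2"
      using wlo[of v] elo_pos by (simp add: power_mult_distrib mult_ac)
  qed
  define Z where "Z = (LINT v|lborel. g v * w v)"
  define Y where "Y = (LINT v|lborel. g v *\<^sub>R (w v *\<^sub>R v))"
  define W where "W = (LINT v|lborel. g v * (w v * (norm v)\<^sup>2))"
  define a where "a = v_alpha alpha E g"
  define m where "m = mean g"
  have Zpos: "Z > 0"
  proof -
    have "(LINT v|lborel. elo * g v) \<le> Z"
      unfolding Z_def
    proof (rule integral_mono)
      show "integrable lborel (\<lambda>v. elo * g v)" using g_int by simp
      show "integrable lborel (\<lambda>v. g v * w v)" by (rule iw)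
      fix v show "elo * g v \<le> g v * w v" using mult_right_mono[OF wlo g_nn[of v]] by (simp add: mult.commute)
    qed
    then show ?thesis using g_mass elo_pos by simp
  qed
  have a_eq: "a = inverse Z *\<^sub>R Y"
  proof -
    have "(LINT v|lborel. (exp (- alpha * E v) * g v) *\<^sub>R v) = Y"
      unfolding Y_def by (rule Bochner_Integration.integral_cong) (simp_all add: w_def mult.commute)
    moreover have "(LINT v|lborel. exp (- alpha * E v) * g v) = Z"
      unfolding Z_def by (rule Bochner_Integration.integral_cong) (simp_all add: w_def mult.commute)
    ultimately show ?thesis by (simp add: a_def v_alpha_def)
  qed
  have Y_eq: "Y = Z *\<^sub>R a" using a_eq Zpos by simp
  have expand: "(LINT v|lborel. g v * (w v * (norm (v - x))\<^sup>2)) = W - 2 * (Y \<bullet> x) + (norm x)\<^sup>2 * Z" for x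
  proof -
    have eq: "(\<lambda>v. g v * (w v * (norm (v - x))\<^sup>2)) = (\<lambda>v. g v * (w v * (norm v)\<^sup>2) - 2 * ((g v *\<^sub>R (w v *\<^sub>R v)) \<bullet> x) + (norm x)\<^sup>2 * (g v * w v))"
      by (rule ext) (simp add: power2_norm_eq_inner inner_diff_left inner_diff_right inner_commute algebra_simps)
    have i2: "integrable lborel (\<lambda>v. 2 * ((g v *\<^sub>R (w v *\<^sub>R v)) \<bullet> x))"
      using iwv by (intro integrable_mult_right integrable_inner_left)
    have i3: "integrable lborel (\<lambda>v. (norm x)\<^sup>2 * (g v * w v))" using iw by (rule integrable_mult_right)
    have "(LINT v|lborel. g v * (w v * (norm (v - x))\<^sup>2)) = W - (LINT v|lborel. 2 * ((g v *\<^sub>R (w v *\<^sub>R v)) \<bullet> x)) + (LINT v|lborel. (norm x)\<^sup>2 * (g v * w v))"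
      unfolding eq W_def by (simp only: Bochner_Integration.integral_add[OF Bochner_Integration.integrable_diff[OF iwsq i2] i3] Bochner_Integration.integral_diff[OF iwsq i2])
    also have "(LINT v|lborel. 2 * ((g v *\<^sub>R (w v *\<^sub>R v)) \<bullet> x)) = 2 * (Y \<bullet> x)"
      unfolding Y_def by (simp only: integral_mult_right_zero integral_inner_left[OF iwv])
    also have "(LINT v|lborel. (norm x)\<^sup>2 * (g v * w v)) = (norm x)\<^sup>2 * Z"
      unfolding Z_def by (simp only: integral_mult_right_zero)
    finally show ?thesis .
  qed
  have Ia_le: "(LINT v|lborel. g v * (w v * (norm (v - a))\<^sup>2)) \<le> (LINT v|lborel. g v * (w v * (norm (v - m))\<^sup>2))"
  proof -
    have "(LINT v|lborel. g v * (w v * (norm (v - m))\<^sup>2)) - (LINT v|lborel. g v * (w v * (norm (v - a))\<^sup>2)) = Z * (norm (a - m))\<^sup>2"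
      unfolding expand Y_eq by (simp add: power2_norm_eq_inner inner_diff_left inner_diff_right inner_commute algebra_simps)
    moreover have "Z * (norm (a - m))\<^sup>2 \<ge> 0" using Zpos by simp
    ultimately show ?thesis by linarith
  qed
  have J_le: "elo * (LINT v|lborel. g v * (norm (a - v))\<^sup>2) \<le> (LINT v|lborel. g v * (w v * (norm (v - a))\<^sup>2))"
  proof -
    have "elo * (LINT v|lborel. g v * (norm (a - v))\<^sup>2) = (LINT v|lborel. elo * (g v * (norm (a - v))\<^sup>2))" by simp
    also have "\<dots> \<le> (LINT v|lborel. g v * (w v * (norm (v - a))\<^sup>2))"
    proof (rule integral_mono)
      show "integrable lborel (\<lambda>v. elo * (g v * (norm (a - v))\<^sup>2))" using int_dsq[of a] by simp
      show "integrable lborel (\<lambda>v. g v * (w v * (norm (v - a))\<^sup>2))"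
        by (rule iwx)
      fix v
      have h: "elo * (norm (a - v))\<^sup>2 \<le> w v * (norm (v - a))\<^sup>2"
        by (simp add: norm_minus_commute mult_right_mono[OF wlo])
      have "g v * (elo * (norm (a - v))\<^sup>2) \<le> g v * (w v * (norm (v - a))\<^sup>2)"
        by (rule mult_left_mono[OF h g_nn])
      then show "elo * (g v * (norm (a - v))\<^sup>2) \<le> g v * (w v * (norm (v - a))\<^sup>2)"
        by (simp add: mult_ac)
    qed
    finally show ?thesis .
  qed
  have Im_le: "(LINT v|lborel. g v * (w v * (norm (v - m))\<^sup>2)) \<le> ehi * (2 * Var g)"
  proof -
    have iT: "integrable lborel (\<lambda>v. (norm (v - m))\<^sup>2 * g v)"
      using int_dsq[of m] by (simp add: norm_minus_commute mult.commute)
    have "(LINT v|lborel. g v * (w v * (norm (v - m))\<^sup>2)) \<le> (LINT v|lborel. ehi * ((norm (v - m))\<^sup>2 * g v))"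
    proof (rule integral_mono)
      show "integrable lborel (\<lambda>v. ehi * ((norm (v - m))\<^sup>2 * g v))" using iT by simp
      show "integrable lborel (\<lambda>v. g v * (w v * (norm (v - m))\<^sup>2))" by (rule iwx)
      fix v
      have h: "w v * (norm (v - m))\<^sup>2 \<le> ehi * (norm (v - m))\<^sup>2" by (rule mult_right_mono[OF whi]) simp
      have "g v * (w v * (norm (v - m))\<^sup>2) \<le> g v * (ehi * (norm (v - m))\<^sup>2)"
        by (rule mult_left_mono[OF h g_nn])
      then show "g v * (w v * (norm (v - m))\<^sup>2) \<le> ehi * ((norm (v - m))\<^sup>2 * g v)"
        by (simp add: mult_ac)
    qed
    also have "\<dots> = ehi * (2 * Var g)" by (simp add: Var_def m_def)
    finally show ?thesis .
  qed
  have "elo * (LINT v|lborel. g v * (norm (a - v))\<^sup>2) \<le> ehi * (2 * Var g)"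
    using J_le Ia_le Im_le by linarith
  then have "(LINT v|lborel. g v * (norm (a - v))\<^sup>2) \<le> ehi / elo * (2 * Var g)"
    using elo_pos by (simp add: field_simps)
  also have "ehi / elo = exp (alpha * (S - I))"
    by (simp add: ehi_def elo_def exp_diff[symmetric] algebra_simps)
  finally show ?thesis by (simp add: a_def S_def I_def)
qed

end

lemma gronwall_simple:
  fixes V :: "real \<Rightarrow> real"
  assumes d: "\<And>t. t \<ge> 0 \<Longrightarrow> \<exists>V'. (V has_real_derivative V') (at t within {0..}) \<and> V' \<le> - r * V t"
    and t: "t \<ge> 0"
  shows "V t \<le> V 0 * exp (- r * t)"
proof -
  define u where "u s = V s * exp (r * s)" for s
  have cont: "continuous_on {0..t} u"
  proof -
    have "continuous_on {0..} V"
      unfolding continuous_on_eq_continuous_within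
    proof (intro ballI)
      fix x :: real assume "x \<in> {0..}"
      then obtain V' where "(V has_real_derivative V') (at x within {0..})" using d by auto
      then show "continuous (at x within {0..}) V" by (rule DERIV_continuous)
    qed
    then have "continuous_on {0..t} V" by (rule continuous_on_subset) auto
    then show ?thesis unfolding u_def by (intro continuous_intros)
  qed
  have "u t \<le> u 0"
  proof (rule DERIV_nonpos_imp_decreasing_open[OF t _ cont])
    fix x :: real assume x: "0 < x" "x < t"
    obtain V' where V': "(V has_real_derivative V') (at x within {0..})" "V' \<le> - r * V x"
      using d[of x] x by auto
    have "(V has_real_derivative V') (at x within {0<..})"
      by (rule DERIV_subset[OF V'(1)]) auto
    then have Vat: "(V has_real_derivative V') (at x)"
      using x at_within_open[of x "{0<..}"] by simp
    have e: "((\<lambda>s. exp (r * s)) has_real_derivative (exp (r * x) * r)) (at x)"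
      by (auto intro!: derivative_eq_intros)
    have "(u has_real_derivative (V' * exp (r * x) + exp (r * x) * r * V x)) (at x)"
      unfolding u_def by (rule DERIV_mult[OF Vat e])
    moreover have "V' * exp (r * x) + exp (r * x) * r * V x \<le> 0"
    proof -
      have "V' + r * V x \<le> 0" using V'(2) by simp
      then have "(V' + r * V x) * exp (r * x) \<le> 0" by (simp add: mult_nonpos_nonneg)
      then show ?thesis by (simp add: algebra_simps)
    qed
    ultimately show "\<exists>y. (u has_real_derivative y) (at x) \<and> y \<le> 0" by blast
  qed
  then have h: "V t * exp (r * t) \<le> V 0" by (simp add: u_def)
  have "V t = V t * exp (r * t) * exp (- r * t)"
    by (simp add: mult.assoc exp_add[symmetric])
  also have "\<dots> \<le> V 0 * exp (- r * t)"
    by (rule mult_right_mono[OF h]) simp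
  finally show ?thesis .
qed

theorem proposition2:
  fixes E :: "real^'d \<Rightarrow> real"
    and f :: "real \<Rightarrow> real^'d \<Rightarrow> real"
    and Xi :: "(real^'d) measure"
    and D :: diffusion
    and lam sig alpha :: real
  assumes E_cont: "continuous_on UNIV E"
    and E_pos: "\<And>v. E v > 0"
    and E_bdd_above: "bdd_above (range E)"
    and E_bdd_below: "bdd_below (range E)"
    and lam: "lam \<ge> 0" and sig: "sig \<ge> 0" and alpha: "alpha > 0"
    \<comment> \<open>xi: random vector with i.i.d. components of zero mean and unit variance\<close>
    and Xi_prob: "prob_space Xi"
    and Xi_sets: "sets Xi = sets borel"
    and Xi_indep: "prob_space.indep_vars Xi (\<lambda>_. borel) (\<lambda>i x. x $ i) UNIV"
    and Xi_ident: "\<And>i j. distr Xi borel (\<lambda>x. x $ i) = distr Xi borel (\<lambda>x. x $ j)"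
    and Xi_mean: "\<And>i. integrable Xi (\<lambda>x. x $ i) \<and> (LINT x|Xi. x $ i) = 0"
    and Xi_var: "\<And>i. integrable Xi (\<lambda>x. (x $ i)\<^sup>2) \<and> prob_space.variance Xi (\<lambda>x. x $ i) = 1"
    \<comment> \<open>f(.,t) probability densities with finite second moments, t \<ge> 0\<close>
    and f_meas: "\<And>t. t \<ge> 0 \<Longrightarrow> f t \<in> borel_measurable lborel"
    and f_nonneg: "\<And>t v. t \<ge> 0 \<Longrightarrow> f t v \<ge> 0"
    and f_int: "\<And>t. t \<ge> 0 \<Longrightarrow> integrable lborel (f t)"
    and f_mass: "\<And>t. t \<ge> 0 \<Longrightarrow> (LINT v|lborel. f t v) = 1"
    and f_mom2: "\<And>t. t \<ge> 0 \<Longrightarrow> integrable lborel (\<lambda>v. (norm v)\<^sup>2 * f t v)"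
    \<comment> \<open>weak form of the Boltzmann-type equation for phi(v) = v and phi(v) = |v|^2\<close>
    and eq_mean: "\<And>t. t \<ge> 0 \<Longrightarrow>
        ((\<lambda>s. LINT v|lborel. f s v *\<^sub>R v) has_vector_derivative
          collision_rhs lam sig D alpha E Xi (f t) (\<lambda>v. v)) (at t within {0..})"
    and eq_energy: "\<And>t. t \<ge> 0 \<Longrightarrow>
        ((\<lambda>s. LINT v|lborel. f s v * (norm v)\<^sup>2) has_vector_derivative
          collision_rhs lam sig D alpha E Xi (f t) (\<lambda>v. (norm v)\<^sup>2)) (at t within {0..})"
  defines "C \<equiv> exp (alpha * (Sup (range E) - Inf (range E)))"
  shows "(\<forall>t>0. Var (f t) \<le> Var (f 0) *
             exp (- (2 * lam - lam\<^sup>2 * C - sig\<^sup>2 * kappa D CARD('d) * C) * t))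
         \<and> (sig\<^sup>2 < lam / kappa D CARD('d) * (2 / C - lam)
              \<longrightarrow> ((\<lambda>t. Var (f t)) \<longlongrightarrow> 0) at_top)"
proof -
  define kap where "kap = kappa D CARD('d)"
  define r where "r = 2 * lam - lam\<^sup>2 * C - sig\<^sup>2 * kap * C"
  define M where "M s = (LINT v|lborel. f s v *\<^sub>R v)" for s
  define En where "En s = (LINT v|lborel. f s v * (norm v)\<^sup>2)" for s
  have kap_pos: "kap > 0" by (cases D) (simp_all add: kap_def kappa_def)
  have C_pos: "C > 0" by (simp add: C_def)
  have Vnn: "Var (f s) \<ge> 0" if "s \<ge> 0" for s
    unfolding Var_def
    by (intro mult_nonneg_nonneg Bochner_Integration.integral_nonneg) (simp_all add: f_nonneg[OF that])
  have VarE: "Var (f s) = 1/2 * (En s - M s \<bullet> M s)" if s: "s \<ge> 0" for s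
    using Var_eq[OF f_meas[OF s] f_nonneg[OF s] f_int[OF s] f_mass[OF s] f_mom2[OF s]]
    by (simp add: En_def M_def mean_def power2_norm_eq_inner)
  have deriv: "\<exists>V'. ((\<lambda>s. Var (f s)) has_real_derivative V') (at t within {0..}) \<and> V' \<le> - r * Var (f t)"
    if t: "t \<ge> 0" for t
  proof -
    note G = f_meas[OF t] f_nonneg[OF t] f_int[OF t] f_mass[OF t] f_mom2[OF t]
    define a where "a = v_alpha alpha E (f t)"
    define J where "J = (LINT v|lborel. f t v * (norm (a - v))\<^sup>2)"
    define M' where "M' = collision_rhs lam sig D alpha E Xi (f t) (\<lambda>v. v)"
    define En' where "En' = collision_rhs lam sig D alpha E Xi (f t) (\<lambda>v. (norm v)\<^sup>2)"
    have M'_eq: "M' = lam *\<^sub>R (a - M t)"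
      using C1[OF G Xi_prob Xi_mean] by (simp add: M'_def a_def M_def mean_def)
    have En'_eq: "En' = 2 * lam * (a \<bullet> M t - En t) + (lam\<^sup>2 + sig\<^sup>2 * kap) * J"
      using C2[OF G Xi_prob Xi_mean Xi_var] by (simp add: En'_def a_def M_def mean_def En_def J_def kap_def)
    have J_le: "J \<le> C * (2 * Var (f t))"
      using key_ineq[OF G E_cont E_bdd_above E_bdd_below alpha] by (simp add: J_def a_def C_def)
    have dM: "(M has_derivative (\<lambda>h. h *\<^sub>R M')) (at t within {0..})"
      using eq_mean[OF t] unfolding has_vector_derivative_def M_def M'_def .
    have dEn: "(En has_real_derivative En') (at t within {0..})"
      using eq_energy[OF t] unfolding has_real_derivative_iff_has_vector_derivative En_def En'_def .
    have "((\<lambda>s. M s \<bullet> M s) has_derivative (\<lambda>h. M t \<bullet> (h *\<^sub>R M') + (h *\<^sub>R M') \<bullet> M t)) (at t within {0..})"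
      by (rule has_derivative_inner[OF dM dM])
    then have dMM: "((\<lambda>s. M s \<bullet> M s) has_real_derivative 2 * (M t \<bullet> M')) (at t within {0..})"
      unfolding has_field_derivative_def
      by (rule has_derivative_eq_rhs) (auto simp: fun_eq_iff inner_commute algebra_simps)
    have dW: "((\<lambda>s. 1/2 * (En s - M s \<bullet> M s)) has_real_derivative 1/2 * (En' - 2 * (M t \<bullet> M'))) (at t within {0..})"
      by (intro DERIV_cmult DERIV_diff dEn dMM)
    have dV: "((\<lambda>s. Var (f s)) has_real_derivative 1/2 * (En' - 2 * (M t \<bullet> M'))) (at t within {0..})"
      by (rule has_field_derivative_transform_within[OF dW zero_less_one]) (use t VarE in auto)
    have val: "1/2 * (En' - 2 * (M t \<bullet> M')) = - 2 * lam * Var (f t) + 1/2 * (lam\<^sup>2 + sig\<^sup>2 * kap) * J"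
    proof -
      have hE: "En t = 2 * Var (f t) + M t \<bullet> M t" using VarE[OF t] by simp
      show ?thesis by (simp add: En'_eq M'_eq hE inner_diff_right inner_commute algebra_simps)
    qed
    have nn: "0 \<le> lam\<^sup>2 + sig\<^sup>2 * kap" using kap_pos by simp
    have "1/2 * (lam\<^sup>2 + sig\<^sup>2 * kap) * J \<le> 1/2 * (lam\<^sup>2 + sig\<^sup>2 * kap) * (C * (2 * Var (f t)))"
      by (rule mult_left_mono[OF J_le]) (use nn in simp)
    then have "1/2 * (En' - 2 * (M t \<bullet> M')) \<le> - r * Var (f t)"
      unfolding val r_def by (simp add: algebra_simps)
    with dV show ?thesis by blast
  qed
  have bound: "Var (f t) \<le> Var (f 0) * exp (- r * t)" if "t \<ge> 0" for t
    by (rule gronwall_simple[OF deriv that]) 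
  show ?thesis
  proof (intro conjI allI impI)
    fix t :: real assume "t > 0"
    then show "Var (f t) \<le> Var (f 0) * exp (- (2 * lam - lam\<^sup>2 * C - sig\<^sup>2 * kappa D CARD('d) * C) * t)"
      using bound[of t] by (simp add: r_def kap_def)
  next
    assume cond: "sig\<^sup>2 < lam / kappa D CARD('d) * (2 / C - lam)"
    have "sig\<^sup>2 * kap < lam * (2 / C - lam)"
      using cond kap_pos by (simp add: kap_def[symmetric] field_simps)
    then have "sig\<^sup>2 * kap * C < lam * (2 / C - lam) * C"
      using C_pos by (simp add: mult_strict_right_mono)
    moreover have "lam * (2 / C - lam) * C = 2 * lam - lam\<^sup>2 * C"
      using C_pos by (simp add: field_simps power2_eq_square)
    ultimately have r_pos: "r > 0" unfolding r_def by linarith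
    have lim: "((\<lambda>t. Var (f 0) * exp (- r * t)) \<longlongrightarrow> 0) at_top"
    proof -
      have e: "((\<lambda>t. exp (- r * t)) \<longlongrightarrow> 0) at_top" using r_pos by real_asymp
      show ?thesis using tendsto_mult[OF tendsto_const[of "Var (f 0)"] e] by simp
    qed
    show "((\<lambda>t. Var (f t)) \<longlongrightarrow> 0) at_top"
    proof (rule tendsto_sandwich[OF _ _ tendsto_const lim])
      show "\<forall>\<^sub>F t in at_top. 0 \<le> Var (f t)"
        using eventually_ge_at_top[of 0] by eventually_elim (rule Vnn)
      show "\<forall>\<^sub>F t in at_top. Var (f t) \<le> Var (f 0) * exp (- r * t)"
        using eventually_ge_at_top[of 0] by eventually_elim (rule bound)
    qed
  qed
qed

end
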